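(* Let $d,n\ge 1$, let $\boldsymbol{a}_1,\ldots,\boldsymbol{a}_n\in\mathbf{R}^d$, let $w_1,\ldots,w_n>0$, fix $\varepsilon>0$ and $0<p\le 2$. Define $\Phi(\boldsymbol{x})=\sum_{j=1}^n w_j\,(\lVert\boldsymbol{x}-\boldsymbol{a}_j\rVert^2+\varepsilon)^{p/2}$ with gradient $\Phi'(\boldsymbol{x})=p\sum_j w_j(\lVert\boldsymbol{x}-\boldsymbol{a}_j\rVert^2+\varepsilon)^{p/2-1}(\boldsymbol{x}-\boldsymbol{a}_j)$. For a point $\boldsymbol{x}^{(t)}\in\mathbf{R}^d$ let $\mu_j^{(t)}=w_j\,(\lVert\boldsymbol{x}^{(t)}-\boldsymbol{a}_j\rVert^2+\varepsilon)^{p/2-1}$, let $\boldsymbol{x}^{(t+1)}=\sum_j\mu_j^{(t)}\boldsymbol{a}_j/\sum_j\mu_j^{(t)}$, and define $$\Psi_t(\boldsymbol{x})=\Phi(\boldsymbol{x}^{(t)})+(\boldsymbol{x}-\boldsymbol{x}^{(t)})^T\Phi'(\boldsymbol{x}^{(t)})+\frac{p}{2}\Big(\sum_j\mu_j^{(t)}\Big)\lVert\boldsymbol{x}-\boldsymbol{x}^{(t)}\rVert^2.$$ Then (i) $\Phi(\boldsymbol{x})\le\Psi_t(\boldsymbol{x})$ for all $\boldsymbol{x}\in\mathbf{R}^d$; (ii) $\Phi(\boldsymbol{x}^{(t)})=\Psi_t(\boldsymbol{x}^{(t)})$; (iii) $\Psi_t$ has $\boldsymbol{x}^{(t+1)}$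 as its unique global minimizer.
   Context: $\lVert\cdot\rVert$ is the Euclidean norm on $\mathbf{R}^d$. *)

theory Defs
  imports "HOL-Analysis.Analysis"
begin

text \<open>Points a_1..a_n are a_0..a_(n-1), indexed by j < n; vectors live in real^'d.\<close>

definition Phi :: "nat \<Rightarrow> (nat \<Rightarrow> real ^ 'd) \<Rightarrow> (nat \<Rightarrow> real) \<Rightarrow> real \<Rightarrow> real \<Rightarrow> real ^ 'd \<Rightarrow> real" where
  "Phi n a w eps p x = (\<Sum>j<n. w j * (norm (x - a j) ^ 2 + eps) powr (p / 2))"

definition Phi' :: "nat \<Rightarrow> (nat \<Rightarrow> real ^ 'd) \<Rightarrow> (nat \<Rightarrow> real) \<Rightarrow> real \<Rightarrow> real \<Rightarrow> real ^ 'd \<Rightarrow> real ^ 'd" where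
  "Phi' n a w eps p x = p *\<^sub>R (\<Sum>j<n. (w j * (norm (x - a j) ^ 2 + eps) powr (p / 2 - 1)) *\<^sub>R (x - a j))"

definition mu :: "(nat \<Rightarrow> real ^ 'd) \<Rightarrow> (nat \<Rightarrow> real) \<Rightarrow> real \<Rightarrow> real \<Rightarrow> real ^ 'd \<Rightarrow> nat \<Rightarrow> real" where
  "mu a w eps p xt j = w j * (norm (xt - a j) ^ 2 + eps) powr (p / 2 - 1)"

definition next_iter :: "nat \<Rightarrow> (nat \<Rightarrow> real ^ 'd) \<Rightarrow> (nat \<Rightarrow> real) \<Rightarrow> real \<Rightarrow> real \<Rightarrow> real ^ 'd \<Rightarrow> real ^ 'd" where
  "next_iter n a w eps p xt =
     (1 / (\<Sum>j<n. mu a w eps p xt j)) *\<^sub>R (\<Sum>j<n. mu a w eps p xt j *\<^sub>R a j)"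

definition Psi :: "nat \<Rightarrow> (nat \<Rightarrow> real ^ 'd) \<Rightarrow> (nat \<Rightarrow> real) \<Rightarrow> real \<Rightarrow> real \<Rightarrow> real ^ 'd \<Rightarrow> real ^ 'd \<Rightarrow> real" where
  "Psi n a w eps p xt x = Phi n a w eps p xt + (x - xt) \<bullet> Phi' n a w eps p xt
     + (p / 2) * (\<Sum>j<n. mu a w eps p xt j) * norm (x - xt) ^ 2"

end

theory Submission
  imports Defs
begin

lemma conc_powr:
  fixes u v r :: real
  assumes "0 < r" "r \<le> 1" "0 < u" "0 < v"
  shows "u powr r \<le> v powr r + r * v powr (r - 1) * (u - v)"
proof -
  have Y: "u powr r * v powr (1 - r) \<le> r * u + (1 - r) * v"
    using Youngs_inequality_0[of r "1 - r" u v] assms by simp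
  have pv: "v powr (r - 1) > 0" using assms by simp
  have "u powr r = (u powr r * v powr (1 - r)) * v powr (r - 1)"
    using assms by (simp add: mult.assoc flip: powr_add)
  also have "\<dots> \<le> (r * u + (1 - r) * v) * v powr (r - 1)"
    using Y pv by (simp add: mult_right_mono)
  also have "\<dots> = v powr r + r * v powr (r - 1) * (u - v)"
  proof -
    have "v * v powr (r - 1) = v powr r"
      using assms powr_add[of v 1 "r - 1"] by simp
    then show ?thesis by (simp add: algebra_simps)
  qed
  finally show ?thesis .
qed

lemma norm_add_sq: "norm (d + e :: 'a::real_inner) ^ 2 = norm d ^ 2 + 2 * (d \<bullet> e) + norm e ^ 2"
  by (simp add: power2_norm_eq_inner inner_add_left inner_add_right inner_commute)

lemma aux_alg:
  fixes w A p q nd ip s e :: real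
  shows "w * (A + p / 2 * q * ((nd + 2 * ip + s + e) - (s + e)))
     = w * A + p / 2 * (w * q) * nd + p * (w * q) * ip"
  by (simp add: algebra_simps)

theorem proposition2:
  fixes n :: nat and a :: "nat \<Rightarrow> real ^ 'd" and w :: "nat \<Rightarrow> real"
    and eps p :: real and xt :: "real ^ 'd"
  assumes "n \<ge> 1"
    and "\<And>j. j < n \<Longrightarrow> w j > 0"
    and "eps > 0"
    and "0 < p" and "p \<le> 2"
  shows "(\<forall>x. Phi n a w eps p x \<le> Psi n a w eps p xt x)
    \<and> Phi n a w eps p xt = Psi n a w eps p xt xt
    \<and> (\<forall>x. x \<noteq> next_iter n a w eps p xt \<longrightarrow>
           Psi n a w eps p xt (next_iter n a w eps p xt) < Psi n a w eps p xt x)"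
proof -
  define m where "m j = mu a w eps p xt j" for j
  define M where "M = (\<Sum>j<n. m j)"
  define S where "S = (\<Sum>j<n. m j *\<^sub>R a j)"
  define N where "N = next_iter n a w eps p xt"
  have mpos: "m j > 0" if "j < n" for j
  proof -
    have "(norm (xt - a j))^2 + eps > 0" using assms(3) by (simp add: add_nonneg_pos)
    then show ?thesis using assms(2)[OF that] by (simp add: m_def mu_def)
  qed
  have Mpos: "M > 0" unfolding M_def
    by (rule sum_pos) (use assms(1) mpos in \<open>auto simp: lessThan_empty_iff\<close>)
  have N: "N = (1 / M) *\<^sub>R S" by (simp add: N_def next_iter_def M_def S_def m_def)
  have MN: "M *\<^sub>R N = S" using Mpos by (simp add: N)
  have sumdiff: "(\<Sum>j<n. m j *\<^sub>R (xt - a j)) = M *\<^sub>R xt - S"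
    by (simp add: M_def S_def scaleR_right_diff_distrib sum_subtractf scaleR_sum_left)
  have g: "Phi' n a w eps p xt = p *\<^sub>R (M *\<^sub>R xt - S)"
    using sumdiff by (simp add: Phi'_def m_def mu_def)
  have PsiE: "Psi n a w eps p xt x = Phi n a w eps p xt + (x - xt) \<bullet> Phi' n a w eps p xt
     + (p / 2) * M * norm (x - xt) ^ 2" for x
    by (simp add: Psi_def M_def m_def)
  have key: "Psi n a w eps p xt x = Phi n a w eps p xt
       + (p / 2) * M * (norm (x - N) ^ 2 - norm (xt - N) ^ 2)" for x
  proof -
    have e1: "x - N = (x - xt) + (xt - N)" by simp
    have "(x - xt) \<bullet> Phi' n a w eps p xt = p * M * ((x - xt) \<bullet> (xt - N))"
      unfolding g MN[symmetric] by (simp add: inner_diff_right algebra_simps)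
    then show ?thesis unfolding PsiE
      by (subst e1, subst norm_add_sq) (simp add: algebra_simps)
  qed
  have i: "Phi n a w eps p x \<le> Psi n a w eps p xt x" for x
  proof -
    define d where "d = x - xt"
    have hterm: "w j * (norm (x - a j) ^ 2 + eps) powr (p / 2)
        \<le> w j * (norm (xt - a j) ^ 2 + eps) powr (p / 2)
           + (p / 2) * m j * norm d ^ 2 + p * m j * (d \<bullet> (xt - a j))" if "j < n" for j
    proof -
      have ex: "x - a j = d + (xt - a j)" by (simp add: d_def)
      have c: "(norm (x - a j) ^ 2 + eps) powr (p / 2) \<le> (norm (xt - a j) ^ 2 + eps) powr (p / 2)
          + (p/2) * (norm (xt - a j) ^ 2 + eps) powr (p / 2 - 1)
             * ((norm (x - a j) ^ 2 + eps) - (norm (xt - a j) ^ 2 + eps))"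
        by (rule conc_powr) (use assms in \<open>auto simp: add_nonneg_pos\<close>)
      have "w j * (norm (x - a j) ^ 2 + eps) powr (p / 2) \<le> w j * ((norm (xt - a j) ^ 2 + eps) powr (p / 2)
          + (p/2) * (norm (xt - a j) ^ 2 + eps) powr (p / 2 - 1)
             * ((norm (x - a j) ^ 2 + eps) - (norm (xt - a j) ^ 2 + eps)))"
        using c assms(2)[OF that] by (simp add: mult_left_mono)
      also have "\<dots> = w j * (norm (xt - a j) ^ 2 + eps) powr (p / 2)
           + (p / 2) * m j * norm d ^ 2 + p * m j * (d \<bullet> (xt - a j))"
        unfolding ex norm_add_sq m_def mu_def by (rule aux_alg)
      finally show ?thesis .
    qed
    have "Phi n a w eps p x \<le> (\<Sum>j<n. w j * (norm (xt - a j) ^ 2 + eps) powr (p / 2)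
           + (p / 2) * m j * norm d ^ 2 + p * m j * (d \<bullet> (xt - a j)))"
      unfolding Phi_def by (rule sum_mono) (use hterm in auto)
    also have "\<dots> = Phi n a w eps p xt + (p / 2) * M * norm d ^ 2
        + p * (\<Sum>j<n. m j * (d \<bullet> (xt - a j)))"
      by (simp add: Phi_def M_def sum.distrib sum_distrib_left sum_distrib_right mult.assoc)
    finally have L: "Phi n a w eps p x \<le> Phi n a w eps p xt + (p / 2) * M * norm d ^ 2
        + p * (\<Sum>j<n. m j * (d \<bullet> (xt - a j)))" .
    have "p * (\<Sum>j<n. m j * (d \<bullet> (xt - a j))) = d \<bullet> Phi' n a w eps p xt"
      by (simp add: Phi'_def inner_sum_right m_def mu_def)
    with L show ?thesis unfolding PsiE d_def by linarith
  qed
  have ii: "Phi n a w eps p xt = Psi n a w eps p xt xt" by (simp add: Psi_def)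
  have iii: "Psi n a w eps p xt N < Psi n a w eps p xt x" if "x \<noteq> N" for x
  proof -
    have "norm (x - N) > 0" using that by simp
    then have "norm (x - N) ^ 2 > 0" by simp
    then have "p * M * norm (x - N) ^ 2 > 0" using Mpos assms(4) by simp
    then show ?thesis unfolding key by (simp add: right_diff_distrib)
  qed
  show ?thesis using i ii iii by (auto simp: N_def)
qed

end
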